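(* Assume Assumption A holds. Then $\mathcal{M}'=\mathcal{M}$, where $\mathcal{M}'$ is the set of $\mu\in\mathcal{M}$ such that for every $(s,t)\in S\times T$, $\sum_{s'\in S}\mu(s'\mid t)\,p(s\mid s')=\sum_{t'\in T}\mu(s\mid t')\,p(t'\mid t)$.
   Context: $S$ is a finite set and $T$ is a copy of $S$. $p(\cdot\mid\cdot)$ is the transition function of an irreducible aperiodic Markov chain on $S$ with invariant measure $m$ (full support). Assumption A: there exist nonnegative numbers $\alpha_s$, $s\in S$, with $\sum_{s\in S\setminus\{\bar s\}}\alpha_s\le1$ for every $\bar s\in S$, such that $p(s'\mid s)=\alpha_{s'}$ whenever $s'\neq s$. $\mathcal{M}$ is the set of probability distributions $\mu$ on $S\times T$ both of whose marginals equal $m$, and $\mu(s\mid t)=\mu(s,t)/m(t)$. *)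

theory Defs
  imports Complex_Main
begin

text \<open>Transition kernels on a finite state type: p s' s denotes p(s' | s).
  The copy T of S is modelled by the same type.\<close>

definition stochastic :: "('s::finite \<Rightarrow> 's \<Rightarrow> real) \<Rightarrow> bool" where
  "stochastic p \<longleftrightarrow> (\<forall>s s'. p s' s \<ge> 0) \<and> (\<forall>s. (\<Sum>s'\<in>UNIV. p s' s) = 1)"

fun nstep :: "('s::finite \<Rightarrow> 's \<Rightarrow> real) \<Rightarrow> nat \<Rightarrow> 's \<Rightarrow> 's \<Rightarrow> real" where
  "nstep p 0 s' s = (if s' = s then 1 else 0)"
| "nstep p (Suc n) s' s = (\<Sum>u\<in>UNIV. p s' u * nstep p n u s)"

definition irreducible_chain :: "('s::finite \<Rightarrow> 's \<Rightarrow> real) \<Rightarrow> bool" where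
  "irreducible_chain p \<longleftrightarrow> (\<forall>s s'. \<exists>n>0. nstep p n s' s > 0)"

definition aperiodic_chain :: "('s::finite \<Rightarrow> 's \<Rightarrow> real) \<Rightarrow> bool" where
  "aperiodic_chain p \<longleftrightarrow> (\<forall>s. Gcd {n. n > 0 \<and> nstep p n s s > 0} = (1::nat))"

definition invariant_measure :: "('s::finite \<Rightarrow> 's \<Rightarrow> real) \<Rightarrow> ('s \<Rightarrow> real) \<Rightarrow> bool" where
  "invariant_measure p m \<longleftrightarrow> (\<forall>s. m s \<ge> 0) \<and> (\<Sum>s\<in>UNIV. m s) = 1 \<and>
     (\<forall>s'. (\<Sum>s\<in>UNIV. m s * p s' s) = m s')"

definition assumptionA :: "('s::finite \<Rightarrow> 's \<Rightarrow> real) \<Rightarrow> bool" where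
  "assumptionA p \<longleftrightarrow> (\<exists>\<alpha> :: 's \<Rightarrow> real. (\<forall>s. \<alpha> s \<ge> 0) \<and>
     (\<forall>sb. (\<Sum>s\<in>UNIV - {sb}. \<alpha> s) \<le> 1) \<and> (\<forall>s s'. s' \<noteq> s \<longrightarrow> p s' s = \<alpha> s'))"

definition couplings :: "('s::finite \<Rightarrow> real) \<Rightarrow> ('s \<Rightarrow> 's \<Rightarrow> real) set" where
  "couplings m = {\<mu>. (\<forall>s t. \<mu> s t \<ge> 0) \<and> (\<Sum>s\<in>UNIV. \<Sum>t\<in>UNIV. \<mu> s t) = 1 \<and>
     (\<forall>s. (\<Sum>t\<in>UNIV. \<mu> s t) = m s) \<and> (\<forall>t. (\<Sum>s\<in>UNIV. \<mu> s t) = m t)}"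

definition cond :: "('s \<Rightarrow> real) \<Rightarrow> ('s \<Rightarrow> 's \<Rightarrow> real) \<Rightarrow> 's \<Rightarrow> 's \<Rightarrow> real" where
  "cond m \<mu> s t = \<mu> s t / m t"

definition couplings' :: "('s::finite \<Rightarrow> 's \<Rightarrow> real) \<Rightarrow> ('s \<Rightarrow> real) \<Rightarrow> ('s \<Rightarrow> 's \<Rightarrow> real) set" where
  "couplings' p m = {\<mu> \<in> couplings m. \<forall>s t.
     (\<Sum>s'\<in>UNIV. cond m \<mu> s' t * p s s') = (\<Sum>t'\<in>UNIV. cond m \<mu> s t' * p t' t)}"

end

theory Submission
  imports Defs
begin

theorem lemma6:
  fixes p :: "'s::finite \<Rightarrow> 's \<Rightarrow> real" and m :: "'s \<Rightarrow> real"
  assumes "stochastic p"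
    and "irreducible_chain p"
    and "aperiodic_chain p"
    and "invariant_measure p m"
    and "\<forall>s. m s > 0"
    and "assumptionA p"
  shows "couplings' p m = couplings m"
proof -
  obtain \<alpha> :: "'s \<Rightarrow> real" where al: "\<forall>s s'. s' \<noteq> s \<longrightarrow> p s' s = \<alpha> s'"
    using assms(6) unfolding assumptionA_def by blast
  define A where "A = (\<Sum>u\<in>UNIV. \<alpha> u)"
  have pdiag: "p s s = 1 - A + \<alpha> s" for s
  proof -
    have "1 = (\<Sum>s'\<in>UNIV. p s' s)" using assms(1) unfolding stochastic_def by simp
    also have "\<dots> = p s s + (\<Sum>s'\<in>UNIV - {s}. p s' s)"
      by (simp add: sum.remove)
    also have "(\<Sum>s'\<in>UNIV - {s}. p s' s) = (\<Sum>s'\<in>UNIV - {s}. \<alpha> s')"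
      using al by (intro sum.cong) auto
    also have "\<dots> = A - \<alpha> s" unfolding A_def by (simp add: sum.remove[of UNIV s])
    finally show ?thesis by simp
  qed
  have pf: "p x y = \<alpha> x + (if x = y then 1 - A else 0)" for x y
    using al pdiag by auto
  have am: "\<alpha> s = A * m s" for s
  proof -
    have "m s = (\<Sum>u\<in>UNIV. m u * p s u)" using assms(4) unfolding invariant_measure_def by simp
    also have "\<dots> = (\<Sum>u\<in>UNIV. m u * \<alpha> s + (if s = u then (1 - A) * m u else 0))"
      by (intro sum.cong) (auto simp: pf algebra_simps)
    also have "\<dots> = (\<Sum>u\<in>UNIV. m u) * \<alpha> s + (1 - A) * m s"
      by (simp add: sum.distrib sum_distrib_right)
    also have "(\<Sum>u\<in>UNIV. m u) = 1" using assms(4) unfolding invariant_measure_def by simp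
    finally show ?thesis by (simp add: algebra_simps)
  qed
  have key: "(\<Sum>s'\<in>UNIV. cond m \<mu> s' t * p s s') = (\<Sum>t'\<in>UNIV. cond m \<mu> s t' * p t' t)"
    if mu: "\<mu> \<in> couplings m" for \<mu> s t
  proof -
    have mt: "m t > 0" using assms(5) by simp
    have c1: "(\<Sum>s'\<in>UNIV. \<mu> s' t) = m t" "(\<Sum>t'\<in>UNIV. \<mu> s t') = m s"
      using mu unfolding couplings_def by auto
    have "(\<Sum>s'\<in>UNIV. cond m \<mu> s' t * p s s')
        = (\<Sum>s'\<in>UNIV. \<mu> s' t * (\<alpha> s / m t) + (if s = s' then (1 - A) * (\<mu> s t / m t) else 0))"
      by (intro sum.cong) (auto simp: pf cond_def algebra_simps)
    also have "\<dots> = (\<Sum>s'\<in>UNIV. \<mu> s' t) * (\<alpha> s / m t) + (1 - A) * (\<mu> s t / m t)"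
      by (simp add: sum.distrib sum_distrib_right[symmetric] del: times_divide_eq_right)
    also have "\<dots> = \<alpha> s + (1 - A) * (\<mu> s t / m t)" using c1 mt by simp
    finally have L: "(\<Sum>s'\<in>UNIV. cond m \<mu> s' t * p s s') = \<alpha> s + (1 - A) * (\<mu> s t / m t)" .
    have "(\<Sum>t'\<in>UNIV. cond m \<mu> s t' * p t' t)
        = (\<Sum>t'\<in>UNIV. A * \<mu> s t' + (if t' = t then (1 - A) * (\<mu> s t / m t) else 0))"
    proof (intro sum.cong refl)
      fix t' have "m t' > 0" using assms(5) by simp
      then show "cond m \<mu> s t' * p t' t = A * \<mu> s t' + (if t' = t then (1 - A) * (\<mu> s t / m t) else 0)"
        by (auto simp: pf am cond_def field_simps)
    qed
    also have "\<dots> = A * (\<Sum>t'\<in>UNIV. \<mu> s t') + (1 - A) * (\<mu> s t / m t)"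
      by (simp add: sum.distrib sum_distrib_left)
    also have "\<dots> = \<alpha> s + (1 - A) * (\<mu> s t / m t)" using c1 am by simp
    finally show ?thesis using L by simp
  qed
  show ?thesis unfolding couplings'_def using key by auto
qed

end
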